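(* Let $X$ be a real vector space and let $\{x_i\}_{i\in I}$ be an algebraic (Hamel) basis of $X$. Then $0\notin cl_c(\{x_i\}_{i\in I})$.
   Context: For $A\subseteq X$, $cor(A):=\{x\in A:\ \forall x'\in X\ \exists \lambda'>0 \text{ with } x+\lambda x'\in A\ \forall\lambda\in[0,\lambda']\}$. The core convex topology $\tau_c$ on $X$ is the topology whose open sets are the unions of families of convex sets $B\subseteq X$ with $cor(B)=B$; $cl_c$ denotes closure in $\tau_c$. *)

theory Defs
  imports "HOL-Analysis.Analysis"
begin

definition cor :: "'a::real_vector set \<Rightarrow> 'a set" where
  "cor A = {x \<in> A. \<forall>x'. \<exists>l'>0. \<forall>l\<in>{0..l'}. x + l *\<^sub>R x' \<in> A}"

definition core_convex_topology :: "'a::real_vector topology" where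
  "core_convex_topology =
     topology (\<lambda>U. \<exists>F. (\<forall>B\<in>F. convex B \<and> cor B = B) \<and> U = \<Union>F)"

definition cl_c :: "'a::real_vector set \<Rightarrow> 'a set" where
  "cl_c A = core_convex_topology closure_of A"

end

theory Submission
  imports Defs
begin

definition nrm :: "'a::real_vector set \<Rightarrow> 'a \<Rightarrow> real" where
  "nrm B x = (\<Sum>b\<in>{b. representation B x b \<noteq> 0}. \<bar>representation B x b\<bar>)"

lemma nrm_S:
  assumes "finite S" "{b. representation B x b \<noteq> 0} \<subseteq> S"
  shows "nrm B x = (\<Sum>b\<in>S. \<bar>representation B x b\<bar>)"
  unfolding nrm_def using assms by (intro sum.mono_neutral_left) auto

lemma nrm_nonneg: "nrm B x \<ge> 0"
  unfolding nrm_def by (rule sum_nonneg) auto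

lemma nrm_comb:
  fixes B :: "'a::real_vector set"
  assumes ind: "independent B" and sp: "span B = UNIV"
  shows "nrm B (a *\<^sub>R x + c *\<^sub>R y) \<le> \<bar>a\<bar> * nrm B x + \<bar>c\<bar> * nrm B y"
proof -
  let ?r = "representation B"
  define S where "S = {b. ?r x b \<noteq> 0} \<union> {b. ?r y b \<noteq> 0}"
  have fS: "finite S" unfolding S_def by (simp add: finite_representation)
  have eq: "?r (a *\<^sub>R x + c *\<^sub>R y) = (\<lambda>b. a * ?r x b + c * ?r y b)"
    using ind sp by (simp add: representation_add representation_scale)
  have sub: "{b. ?r (a *\<^sub>R x + c *\<^sub>R y) b \<noteq> 0} \<subseteq> S"
    unfolding eq S_def by auto
  have "nrm B (a *\<^sub>R x + c *\<^sub>R y) = (\<Sum>b\<in>S. \<bar>a * ?r x b + c * ?r y b\<bar>)"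
    using nrm_S[OF fS sub] eq by simp
  also have "\<dots> \<le> (\<Sum>b\<in>S. \<bar>a\<bar> * \<bar>?r x b\<bar> + \<bar>c\<bar> * \<bar>?r y b\<bar>)"
    by (intro sum_mono) (simp add: abs_mult[symmetric] abs_triangle_ineq)
  also have "\<dots> = \<bar>a\<bar> * nrm B x + \<bar>c\<bar> * nrm B y"
    using nrm_S[OF fS, of B x] nrm_S[OF fS, of B y]
    by (simp add: sum.distrib sum_distrib_left S_def)
  finally show ?thesis .
qed

lemma istop: "istopology (\<lambda>U. \<exists>F. (\<forall>B\<in>F. convex B \<and> cor B = B) \<and> U = \<Union>F)"
  (is "istopology ?P")
proof -
  have int: "cor (A \<inter> C) = A \<inter> C" if hA: "cor A = A" and hC: "cor C = C" for A C :: "'a set"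
  proof
    show "cor (A \<inter> C) \<subseteq> A \<inter> C" unfolding cor_def by auto
    show "A \<inter> C \<subseteq> cor (A \<inter> C)"
    proof
      fix x assume x: "x \<in> A \<inter> C"
      have "\<forall>x'. \<exists>l'>0. \<forall>l\<in>{0..l'}. x + l *\<^sub>R x' \<in> A \<inter> C"
      proof
        fix x'
        obtain l1 where l1: "l1 > 0" "\<forall>l\<in>{0..l1}. x + l *\<^sub>R x' \<in> A"
          using x hA unfolding cor_def by blast
        obtain l2 where l2: "l2 > 0" "\<forall>l\<in>{0..l2}. x + l *\<^sub>R x' \<in> C"
          using x hC unfolding cor_def by blast
        show "\<exists>l'>0. \<forall>l\<in>{0..l'}. x + l *\<^sub>R x' \<in> A \<inter> C"
          using l1 l2 by (intro exI[of _ "min l1 l2"]) auto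
      qed
      then show "x \<in> cor (A \<inter> C)" using x unfolding cor_def by auto
    qed
  qed
  show ?thesis unfolding istopology_def
  proof (intro conjI allI impI)
    fix S T assume "?P S" "?P T"
    then obtain F G where F: "\<forall>B\<in>F. convex B \<and> cor B = B" "S = \<Union>F"
      and G: "\<forall>B\<in>G. convex B \<and> cor B = B" "T = \<Union>G" by blast
    let ?H = "{A \<inter> C | A C. A \<in> F \<and> C \<in> G}"
    have "\<forall>B\<in>?H. convex B \<and> cor B = B"
    proof
      fix D assume "D \<in> ?H"
      then obtain A C where "D = A \<inter> C" "A \<in> F" "C \<in> G" by blast
      then show "convex D \<and> cor D = D" using F(1) G(1) int convex_Int by metis
    qed
    moreover have "S \<inter> T = \<Union>?H" unfolding F(2) G(2) by blast
    ultimately show "?P (S \<inter> T)" by (intro exI[of _ ?H]) simp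
  next
    fix K assume K: "\<forall>K\<in>K. ?P K"
    then have "\<forall>k\<in>K. \<exists>F. (\<forall>B\<in>F. convex B \<and> cor B = B) \<and> k = \<Union>F" by blast
    then obtain f where f: "\<forall>k\<in>K. (\<forall>B\<in>f k. convex B \<and> cor B = B) \<and> k = \<Union>(f k)"
      by metis
    have "\<forall>B\<in>\<Union>(f ` K). convex B \<and> cor B = B" using f by auto
    moreover have "\<Union>K = \<Union>(\<Union>(f ` K))"
    proof -
      have e: "\<And>k. k\<in>K \<Longrightarrow> \<Union>(f k) = k" using f by auto
      have "\<Union>(\<Union>(f ` K)) = (\<Union>k\<in>K. \<Union>(f k))" by auto
      also have "\<dots> = (\<Union>k\<in>K. k)" using e by simp
      finally show ?thesis by simp
    qed
    ultimately show "?P (\<Union>K)" by (intro exI[of _ "\<Union>(f ` K)"]) simp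
  qed
qed

theorem lemma3p14:
  fixes B :: "'a::real_vector set"
  assumes "independent B" and "span B = UNIV"
  shows "0 \<notin> cl_c B"
proof -
  note ind = assms(1) and sp = assms(2)
  define U where "U = {x::'a. nrm B x < 1}"
  have n0: "nrm B 0 = 0" by (simp add: nrm_def representation_zero)
  have nb: "nrm B b = 1" if "b \<in> B" for b
  proof -
    have "{v. representation B b v \<noteq> 0} = {b}"
      using representation_basis[OF ind that] by auto
    then show ?thesis unfolding nrm_def using representation_basis[OF ind that] by simp
  qed
  have cvx: "convex U"
    unfolding convex_def U_def
  proof (intro ballI allI impI, simp)
    fix x y :: 'a and u v :: real
    assume h: "nrm B x < 1" "nrm B y < 1" "0 \<le> u" "0 \<le> v" "u + v = 1"
    have "nrm B (u *\<^sub>R x + v *\<^sub>R y) \<le> u * nrm B x + v * nrm B y"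
      using nrm_comb[OF ind sp, of u x v y] h by simp
    also have "\<dots> < 1"
    proof (cases "u = 0")
      case True then show ?thesis using h by simp
    next
      case False
      then have "u * nrm B x < u" using h by simp
      moreover have "v * nrm B y \<le> v" using h by (simp add: mult_left_le)
      ultimately show ?thesis using h by linarith
    qed
    finally show "nrm B (u *\<^sub>R x + v *\<^sub>R y) < 1" .
  qed
  have core: "cor U = U"
  proof
    show "cor U \<subseteq> U" unfolding cor_def by auto
    show "U \<subseteq> cor U"
    proof
      fix x assume x: "x \<in> U"
      have "\<exists>l'>0. \<forall>l\<in>{0..l'}. x + l *\<^sub>R x' \<in> U" for x'
      proof -
        define l' where "l' = (1 - nrm B x) / (nrm B x' + 1)"
        have pos: "nrm B x' + 1 > 0" using nrm_nonneg[of B x'] by simp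
        have "l' > 0" using x pos unfolding U_def l'_def by simp
        moreover have "x + l *\<^sub>R x' \<in> U" if l: "l \<in> {0..l'}" for l
        proof -
          have "nrm B (1 *\<^sub>R x + l *\<^sub>R x') \<le> nrm B x + l * nrm B x'"
            using nrm_comb[OF ind sp, of 1 x l x'] l by simp
          also have "l * nrm B x' \<le> l' * nrm B x'"
            using l nrm_nonneg[of B x'] by (simp add: mult_right_mono)
          also have "l' * nrm B x' < 1 - nrm B x"
          proof -
            have "l' * (nrm B x' + 1) = 1 - nrm B x" unfolding l'_def using pos by simp
            then show ?thesis using \<open>l' > 0\<close> by (simp add: algebra_simps)
          qed
          finally show ?thesis unfolding U_def by simp
        qed
        ultimately show ?thesis by blast
      qed
      then show "x \<in> cor U" using x unfolding cor_def by auto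
    qed
  qed
  have op: "openin core_convex_topology U"
    unfolding core_convex_topology_def topology_inverse'[OF istop]
    using cvx core by (intro exI[of _ "{U}"]) auto
  have "0 \<in> U" unfolding U_def using n0 by simp
  moreover have "U \<inter> B = {}" unfolding U_def using nb by auto
  ultimately show ?thesis
    unfolding cl_c_def in_closure_of using op by auto
qed

end
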